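(* The variety $\mathcal{WHB}$ of WHB-algebras has the finite model property, i.e. every equation that fails in some WHB-algebra fails in some finite WHB-algebra.
   Context: A WHB-algebra is an algebra $(A,\wedge,\vee,\to,\leftarrow,0,1)$ such that $(A,\wedge,\vee,0,1)$ is a bounded distributive lattice and for all $a,b,c\in A$: $a\to a=1$; $a\to(b\wedge c)=(a\to b)\wedge(a\to c)$; $(a\vee b)\to c=(a\to c)\wedge(b\to c)$; $(a\to b)\wedge(b\to c)\le a\to c$; $a\leftarrow a=0$; $(a\vee b)\leftarrow c=(a\leftarrow c)\vee(b\leftarrow c)$; $a\leftarrow(b\wedge c)=(a\leftarrow b)\vee(a\leftarrow c)$; $a\leftarrow c\le(a\leftarrow b)\vee(b\leftarrow c)$; $a\wedge((a\to b)\leftarrow 0)\le b$; $a\le b\vee(1\to(a\leftarrow b))$. *)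

theory Defs
  imports Main
begin

text \<open>Algebras in the signature (meet, join, imp, coimp, 0, 1), given by a carrier set
  and total operations (only their behaviour on the carrier matters).\<close>
record 'a whb_struct =
  car   :: "'a set"
  mt    :: "'a \<Rightarrow> 'a \<Rightarrow> 'a"
  jn    :: "'a \<Rightarrow> 'a \<Rightarrow> 'a"
  im    :: "'a \<Rightarrow> 'a \<Rightarrow> 'a"
  coim  :: "'a \<Rightarrow> 'a \<Rightarrow> 'a"
  zr    :: "'a"
  on    :: "'a"

definition leq :: "('a, 'b) whb_struct_scheme \<Rightarrow> 'a \<Rightarrow> 'a \<Rightarrow> bool" where
  "leq A a b \<longleftrightarrow> mt A a b = a"

definition bdl :: "('a, 'b) whb_struct_scheme \<Rightarrow> bool" where
  "bdl A \<longleftrightarrow>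
     zr A \<in> car A \<and> on A \<in> car A \<and>
     (\<forall>a\<in>car A. \<forall>b\<in>car A. mt A a b \<in> car A \<and> jn A a b \<in> car A) \<and>
     (\<forall>a\<in>car A. \<forall>b\<in>car A. mt A a b = mt A b a \<and> jn A a b = jn A b a) \<and>
     (\<forall>a\<in>car A. \<forall>b\<in>car A. \<forall>c\<in>car A.
        mt A a (mt A b c) = mt A (mt A a b) c \<and> jn A a (jn A b c) = jn A (jn A a b) c) \<and>
     (\<forall>a\<in>car A. \<forall>b\<in>car A. mt A a (jn A a b) = a \<and> jn A a (mt A a b) = a) \<and>
     (\<forall>a\<in>car A. \<forall>b\<in>car A. \<forall>c\<in>car A. mt A a (jn A b c) = jn A (mt A a b) (mt A a c)) \<and>
     (\<forall>a\<in>car A. mt A (zr A) a = zr A \<and> jn A (on A) a = on A)"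

definition whb_algebra :: "('a, 'b) whb_struct_scheme \<Rightarrow> bool" where
  "whb_algebra A \<longleftrightarrow> bdl A \<and>
     (\<forall>a\<in>car A. \<forall>b\<in>car A. im A a b \<in> car A \<and> coim A a b \<in> car A) \<and>
     (\<forall>a\<in>car A. im A a a = on A) \<and>
     (\<forall>a\<in>car A. \<forall>b\<in>car A. \<forall>c\<in>car A. im A a (mt A b c) = mt A (im A a b) (im A a c)) \<and>
     (\<forall>a\<in>car A. \<forall>b\<in>car A. \<forall>c\<in>car A. im A (jn A a b) c = mt A (im A a c) (im A b c)) \<and>
     (\<forall>a\<in>car A. \<forall>b\<in>car A. \<forall>c\<in>car A. leq A (mt A (im A a b) (im A b c)) (im A a c)) \<and>
     (\<forall>a\<in>car A. coim A a a = zr A) \<and>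
     (\<forall>a\<in>car A. \<forall>b\<in>car A. \<forall>c\<in>car A. coim A (jn A a b) c = jn A (coim A a c) (coim A b c)) \<and>
     (\<forall>a\<in>car A. \<forall>b\<in>car A. \<forall>c\<in>car A. coim A a (mt A b c) = jn A (coim A a b) (coim A a c)) \<and>
     (\<forall>a\<in>car A. \<forall>b\<in>car A. \<forall>c\<in>car A. leq A (coim A a c) (jn A (coim A a b) (coim A b c))) \<and>
     (\<forall>a\<in>car A. \<forall>b\<in>car A. leq A (mt A a (coim A (im A a b) (zr A))) b) \<and>
     (\<forall>a\<in>car A. \<forall>b\<in>car A. leq A a (jn A b (im A (on A) (coim A a b))))"

datatype trm = Var nat | Meet trm trm | Join trm trm | Imp trm trm | Coimp trm trm
  | Bot | Top

primrec eval :: "('a, 'b) whb_struct_scheme \<Rightarrow> (nat \<Rightarrow> 'a) \<Rightarrow> trm \<Rightarrow> 'a" where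
  "eval A v (Var n) = v n"
| "eval A v (Meet s t) = mt A (eval A v s) (eval A v t)"
| "eval A v (Join s t) = jn A (eval A v s) (eval A v t)"
| "eval A v (Imp s t) = im A (eval A v s) (eval A v t)"
| "eval A v (Coimp s t) = coim A (eval A v s) (eval A v t)"
| "eval A v Bot = zr A"
| "eval A v Top = on A"

definition holds :: "('a, 'b) whb_struct_scheme \<Rightarrow> trm \<Rightarrow> trm \<Rightarrow> bool" where
  "holds A s t \<longleftrightarrow> (\<forall>v. (\<forall>n. v n \<in> car A) \<longrightarrow> eval A v s = eval A v t)"

end

theory Submission
  imports Defs
begin
lemma bdl_parts:
  assumes "bdl A"
  shows "zr A \<in> car A" "on A \<in> car A"
  "\<forall>a\<in>car A. \<forall>b\<in>car A. mt A a b \<in> car A \<and> jn A a b \<in> car A"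
  "\<forall>a\<in>car A. \<forall>b\<in>car A. mt A a b = mt A b a \<and> jn A a b = jn A b a"
  "\<forall>a\<in>car A. \<forall>b\<in>car A. \<forall>c\<in>car A.
        mt A a (mt A b c) = mt A (mt A a b) c \<and> jn A a (jn A b c) = jn A (jn A a b) c"
  "\<forall>a\<in>car A. \<forall>b\<in>car A. mt A a (jn A a b) = a \<and> jn A a (mt A a b) = a"
  "\<forall>a\<in>car A. \<forall>b\<in>car A. \<forall>c\<in>car A. mt A a (jn A b c) = jn A (mt A a b) (mt A a c)"
  "\<forall>a\<in>car A. mt A (zr A) a = zr A \<and> jn A (on A) a = on A"
  using assms unfolding bdl_def apply -
  apply (elim conjE, assumption)+
  done

lemma whb_parts:
  assumes "whb_algebra A"
  shows "bdl A"
     "\<forall>a\<in>car A. \<forall>b\<in>car A. im A a b \<in> car A \<and> coim A a b \<in> car A"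
     "\<forall>a\<in>car A. im A a a = on A"
     "\<forall>a\<in>car A. \<forall>b\<in>car A. \<forall>c\<in>car A. im A a (mt A b c) = mt A (im A a b) (im A a c)"
     "\<forall>a\<in>car A. \<forall>b\<in>car A. \<forall>c\<in>car A. im A (jn A a b) c = mt A (im A a c) (im A b c)"
     "\<forall>a\<in>car A. \<forall>b\<in>car A. \<forall>c\<in>car A. leq A (mt A (im A a b) (im A b c)) (im A a c)"
     "\<forall>a\<in>car A. coim A a a = zr A"
     "\<forall>a\<in>car A. \<forall>b\<in>car A. \<forall>c\<in>car A. coim A (jn A a b) c = jn A (coim A a c) (coim A b c)"
     "\<forall>a\<in>car A. \<forall>b\<in>car A. \<forall>c\<in>car A. coim A a (mt A b c) = jn A (coim A a b) (coim A a c)"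
     "\<forall>a\<in>car A. \<forall>b\<in>car A. \<forall>c\<in>car A. leq A (coim A a c) (jn A (coim A a b) (coim A b c))"
     "\<forall>a\<in>car A. \<forall>b\<in>car A. leq A (mt A a (coim A (im A a b) (zr A))) b"
     "\<forall>a\<in>car A. \<forall>b\<in>car A. leq A a (jn A b (im A (on A) (coim A a b)))"
  using assms unfolding whb_algebra_def apply -
  apply (elim conjE, assumption)+
  done

locale whb =
  fixes A :: "'a whb_struct"
  assumes W: "whb_algebra A"
begin

abbreviation "C \<equiv> car A"
abbreviation "mm \<equiv> mt A"
abbreviation "jj \<equiv> jn A"
abbreviation "imp \<equiv> im A"
abbreviation "cim \<equiv> coim A"
abbreviation "zz \<equiv> zr A"
abbreviation "oo \<equiv> on A"
abbreviation "lq \<equiv> leq A"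

lemma B: "bdl A" using whb_parts(1)[OF W] .

lemma cl[simp]:
  "zz \<in> C" "oo \<in> C"
  "a \<in> C \<Longrightarrow> b \<in> C \<Longrightarrow> mm a b \<in> C"
  "a \<in> C \<Longrightarrow> b \<in> C \<Longrightarrow> jj a b \<in> C"
  "a \<in> C \<Longrightarrow> b \<in> C \<Longrightarrow> imp a b \<in> C"
  "a \<in> C \<Longrightarrow> b \<in> C \<Longrightarrow> cim a b \<in> C"
  using bdl_parts(1,2,3)[OF B] whb_parts(2)[OF W] by simp_all

lemma mcomm: "a \<in> C \<Longrightarrow> b \<in> C \<Longrightarrow> mm a b = mm b a"
  and jcomm: "a \<in> C \<Longrightarrow> b \<in> C \<Longrightarrow> jj a b = jj b a"
  and massoc: "a \<in> C \<Longrightarrow> b \<in> C \<Longrightarrow> c \<in> C \<Longrightarrow> mm a (mm b c) = mm (mm a b) c"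
  and jassoc: "a \<in> C \<Longrightarrow> b \<in> C \<Longrightarrow> c \<in> C \<Longrightarrow> jj a (jj b c) = jj (jj a b) c"
  and abs1: "a \<in> C \<Longrightarrow> b \<in> C \<Longrightarrow> mm a (jj a b) = a"
  and abs2: "a \<in> C \<Longrightarrow> b \<in> C \<Longrightarrow> jj a (mm a b) = a"
  and dist: "a \<in> C \<Longrightarrow> b \<in> C \<Longrightarrow> c \<in> C \<Longrightarrow> mm a (jj b c) = jj (mm a b) (mm a c)"
  and botm: "a \<in> C \<Longrightarrow> mm zz a = zz"
  and topj: "a \<in> C \<Longrightarrow> jj oo a = oo"
  using bdl_parts[OF B] by blast+
lemma midem: "a \<in> C \<Longrightarrow> mm a a = a"
proof -
  assume h: "a \<in> C"
  have "jj a (mm a a) = a" using h by (simp add: abs2)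
  hence "mm a a = mm a (jj a (mm a a))" by simp
  also have "\<dots> = a" using h by (simp add: abs1)
  finally show ?thesis .
qed
lemma jidem: "a \<in> C \<Longrightarrow> jj a a = a"
proof -
  assume h: "a \<in> C"
  have "mm a (jj a a) = a" using h by (simp add: abs1)
  hence "jj a a = jj a (mm a (jj a a))" by simp
  also have "\<dots> = a" using h by (simp add: abs2)
  finally show ?thesis .
qed

lemma le_refl: "a \<in> C \<Longrightarrow> lq a a" by (simp add: leq_def midem)
lemma le_antisym: "a \<in> C \<Longrightarrow> b \<in> C \<Longrightarrow> lq a b \<Longrightarrow> lq b a \<Longrightarrow> a = b"
  using mcomm[of a b] by (simp add: leq_def)
lemma le_trans: "a \<in> C \<Longrightarrow> b \<in> C \<Longrightarrow> c \<in> C \<Longrightarrow> lq a b \<Longrightarrow> lq b c \<Longrightarrow> lq a c"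
  using massoc[of a b c] by (simp add: leq_def)
lemma mm_absorb: "a \<in> C \<Longrightarrow> b \<in> C \<Longrightarrow> mm (mm a b) a = mm a b"
proof -
  assume h: "a \<in> C" "b \<in> C"
  have "mm (mm a b) a = mm a (mm a b)" using h mcomm[of "mm a b" a] by simp
  also have "\<dots> = mm (mm a a) b" using h massoc[of a a b] by simp
  finally show ?thesis using h midem[of a] by simp
qed
lemma le_meet: "c \<in> C \<Longrightarrow> a \<in> C \<Longrightarrow> b \<in> C \<Longrightarrow> lq c (mm a b) \<longleftrightarrow> lq c a \<and> lq c b"
proof -
  assume h: "c \<in> C" "a \<in> C" "b \<in> C"
  show ?thesis
  proof
    assume "lq c (mm a b)"
    then have e: "mm c (mm a b) = c" by (simp add: leq_def)
    have "mm c a = mm (mm c (mm a b)) a" using e by simp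
    also have "\<dots> = mm c (mm (mm a b) a)" using h massoc[of c "mm a b" a] by simp
    also have "\<dots> = c" using h e mm_absorb[of a b] by simp
    finally have 1: "lq c a" by (simp add: leq_def)
    have "mm c b = mm (mm c (mm a b)) b" using e by simp
    also have "\<dots> = mm c (mm (mm a b) b)" using h massoc[of c "mm a b" b] by simp
    also have "mm (mm a b) b = mm a (mm b b)" using h massoc[of a b b] by simp
    also have "\<dots> = mm a b" using h midem[of b] by simp
    finally have 2: "lq c b" using e by (simp add: leq_def)
    show "lq c a \<and> lq c b" using 1 2 by simp
  next
    assume "lq c a \<and> lq c b"
    then have e: "mm c a = c" "mm c b = c" by (simp_all add: leq_def)
    have "mm c (mm a b) = mm (mm c a) b" using h massoc[of c a b] by simp
    also have "\<dots> = c" using e by simp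
    finally show "lq c (mm a b)" by (simp add: leq_def)
  qed
qed
lemma le_join_iff: "a \<in> C \<Longrightarrow> b \<in> C \<Longrightarrow> lq a b \<longleftrightarrow> jj a b = b"
proof -
  assume h: "a \<in> C" "b \<in> C"
  show ?thesis
  proof
    assume "lq a b"
    hence e: "mm a b = a" by (simp add: leq_def)
    have "jj a b = jj (mm a b) b" using e by simp
    also have "\<dots> = jj b (mm a b)" using h jcomm[of "mm a b" b] by simp
    also have "\<dots> = jj b (mm b a)" using h mcomm[of a b] by simp
    also have "\<dots> = b" using h abs2[of b a] by simp
    finally show "jj a b = b" .
  next
    assume e: "jj a b = b"
    have "mm a b = mm a (jj a b)" using e by simp
    also have "\<dots> = a" using h abs1[of a b] by simp
    finally show "lq a b" by (simp add: leq_def)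
  qed
qed
lemma jj_absorb: "a \<in> C \<Longrightarrow> b \<in> C \<Longrightarrow> jj (jj a b) a = jj a b"
proof -
  assume h: "a \<in> C" "b \<in> C"
  have "jj (jj a b) a = jj a (jj a b)" using h jcomm[of "jj a b" a] by simp
  also have "\<dots> = jj (jj a a) b" using h jassoc[of a a b] by simp
  finally show ?thesis using h jidem[of a] by simp
qed
lemma join_le: "c \<in> C \<Longrightarrow> a \<in> C \<Longrightarrow> b \<in> C \<Longrightarrow> lq (jj a b) c \<longleftrightarrow> lq a c \<and> lq b c"
proof -
  assume h: "c \<in> C" "a \<in> C" "b \<in> C"
  show ?thesis
  proof
    assume "lq (jj a b) c"
    then have e: "jj (jj a b) c = c" using h le_join_iff[of "jj a b" c] by simp
    have "jj a c = jj a (jj (jj a b) c)" using e by simp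
    also have "\<dots> = jj (jj a (jj a b)) c" using h jassoc[of a "jj a b" c] by simp
    also have "jj a (jj a b) = jj a b" using h jj_absorb[of a b] jcomm[of a "jj a b"] by simp
    finally have 1: "lq a c" using h e le_join_iff[of a c] by simp
    have "jj b c = jj b (jj (jj a b) c)" using e by simp
    also have "\<dots> = jj (jj b (jj a b)) c" using h jassoc[of b "jj a b" c] by simp
    also have "jj b (jj a b) = jj b (jj b a)" using h jcomm[of a b] by simp
    also have "\<dots> = jj b a" using h jj_absorb[of b a] jcomm[of b "jj b a"] by simp
    also have "\<dots> = jj a b" using h jcomm[of a b] by simp
    finally have 2: "lq b c" using h e le_join_iff[of b c] by simp
    show "lq a c \<and> lq b c" using 1 2 by simp
  next
    assume "lq a c \<and> lq b c"
    then have e: "jj a c = c" "jj b c = c" using h le_join_iff by auto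
    have "jj (jj a b) c = jj a (jj b c)" using h jassoc[of a b c] by simp
    also have "\<dots> = c" using e by simp
    finally show "lq (jj a b) c" using h le_join_iff[of "jj a b" c] by simp
  qed
qed
lemma meet_le1: "a \<in> C \<Longrightarrow> b \<in> C \<Longrightarrow> lq (mm a b) a"
  using le_meet[of "mm a b" a b] le_refl[of "mm a b"] by simp
lemma meet_le2: "a \<in> C \<Longrightarrow> b \<in> C \<Longrightarrow> lq (mm a b) b"
  using le_meet[of "mm a b" a b] le_refl[of "mm a b"] by simp
lemma join_ge1: "a \<in> C \<Longrightarrow> b \<in> C \<Longrightarrow> lq a (jj a b)"
  using join_le[of "jj a b" a b] le_refl[of "jj a b"] by simp
lemma join_ge2: "a \<in> C \<Longrightarrow> b \<in> C \<Longrightarrow> lq b (jj a b)"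
  using join_le[of "jj a b" a b] le_refl[of "jj a b"] by simp
lemma bot_le: "a \<in> C \<Longrightarrow> lq zz a" by (simp add: leq_def botm)
lemma le_top: "a \<in> C \<Longrightarrow> lq a oo" by (simp add: le_join_iff jcomm[of a oo] topj)
lemma dist2: "a \<in> C \<Longrightarrow> b \<in> C \<Longrightarrow> c \<in> C \<Longrightarrow> jj a (mm b c) = mm (jj a b) (jj a c)"
proof -
  assume h: "a \<in> C" "b \<in> C" "c \<in> C"
  have "mm (jj a b) (jj a c) = jj (mm (jj a b) a) (mm (jj a b) c)"
    using h by (simp add: dist)
  also have "mm (jj a b) a = a" using h mcomm[of "jj a b" a] by (simp add: abs1)
  also have "mm (jj a b) c = jj (mm a c) (mm b c)" using h mcomm[of "jj a b" c] mcomm[of a c] mcomm[of b c]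
    by (simp add: dist)
  also have "jj a (jj (mm a c) (mm b c)) = jj (jj a (mm a c)) (mm b c)"
    using h by (simp add: jassoc)
  also have "jj a (mm a c) = a" using h by (simp add: abs2)
  finally show ?thesis by simp
qed
lemma meet_mono: "a \<in> C \<Longrightarrow> b \<in> C \<Longrightarrow> c \<in> C \<Longrightarrow> d \<in> C \<Longrightarrow> lq a b \<Longrightarrow> lq c d \<Longrightarrow> lq (mm a c) (mm b d)"
  using le_meet[of "mm a c" b d] meet_le1[of a c] meet_le2[of a c] le_trans[of "mm a c" a b] le_trans[of "mm a c" c d]
  by simp
lemma join_mono: "a \<in> C \<Longrightarrow> b \<in> C \<Longrightarrow> c \<in> C \<Longrightarrow> d \<in> C \<Longrightarrow> lq a b \<Longrightarrow> lq c d \<Longrightarrow> lq (jj a c) (jj b d)"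
  using join_le[of "jj b d" a c] join_ge1[of b d] join_ge2[of b d] le_trans[of a b "jj b d"] le_trans[of c d "jj b d"]
  by simp
lemma meet_top: "a \<in> C \<Longrightarrow> mm oo a = a"
  using le_top[of a] mcomm[of a oo] by (simp add: leq_def)
lemma join_bot: "a \<in> C \<Longrightarrow> jj zz a = a"
  using bot_le[of a] le_join_iff[of zz a] by simp

lemma Wp:
  "a \<in> C \<Longrightarrow> imp a a = oo"
  "a \<in> C \<Longrightarrow> b \<in> C \<Longrightarrow> c \<in> C \<Longrightarrow> imp a (mm b c) = mm (imp a b) (imp a c)"
  "a \<in> C \<Longrightarrow> b \<in> C \<Longrightarrow> c \<in> C \<Longrightarrow> imp (jj a b) c = mm (imp a c) (imp b c)"
  "a \<in> C \<Longrightarrow> cim a a = zz"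
  "a \<in> C \<Longrightarrow> b \<in> C \<Longrightarrow> c \<in> C \<Longrightarrow> cim (jj a b) c = jj (cim a c) (cim b c)"
  "a \<in> C \<Longrightarrow> b \<in> C \<Longrightarrow> c \<in> C \<Longrightarrow> cim a (mm b c) = jj (cim a b) (cim a c)"
  "a \<in> C \<Longrightarrow> b \<in> C \<Longrightarrow> lq (mm a (cim (imp a b) zz)) b"
  "a \<in> C \<Longrightarrow> b \<in> C \<Longrightarrow> lq a (jj b (imp oo (cim a b)))"
  using whb_parts(3)[OF W] apply simp
  using whb_parts(4)[OF W] apply simp
  using whb_parts(5)[OF W] apply simp
  using whb_parts(7)[OF W] apply simp
  using whb_parts(8)[OF W] apply simp
  using whb_parts(9)[OF W] apply simp
  using whb_parts(11)[OF W] apply simp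
  using whb_parts(12)[OF W] apply simp
  done

lemma imp_mono2: "a \<in> C \<Longrightarrow> b \<in> C \<Longrightarrow> c \<in> C \<Longrightarrow> lq b c \<Longrightarrow> lq (imp a b) (imp a c)"
proof -
  assume h: "a \<in> C" "b \<in> C" "c \<in> C" "lq b c"
  have "mm b c = b" using h by (simp add: leq_def)
  then have "imp a b = mm (imp a b) (imp a c)" using h Wp(2)[of a b c] by simp
  then show ?thesis unfolding leq_def by (rule sym)
qed
lemma imp_anti1: "a \<in> C \<Longrightarrow> b \<in> C \<Longrightarrow> c \<in> C \<Longrightarrow> lq a b \<Longrightarrow> lq (imp b c) (imp a c)"
proof -
  assume h: "a \<in> C" "b \<in> C" "c \<in> C" "lq a b"
  have "jj a b = b" using h le_join_iff by blast
  then have "imp b c = mm (imp a c) (imp b c)" using h Wp(3)[of a b c] by simp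
  also have "\<dots> = mm (imp b c) (imp a c)" using h by (rule_tac mcomm) simp_all
  finally show ?thesis unfolding leq_def by (rule sym)
qed
lemma cim_mono1: "a \<in> C \<Longrightarrow> b \<in> C \<Longrightarrow> c \<in> C \<Longrightarrow> lq a b \<Longrightarrow> lq (cim a c) (cim b c)"
proof -
  assume h: "a \<in> C" "b \<in> C" "c \<in> C" "lq a b"
  have "jj a b = b" using h le_join_iff by blast
  then have "cim b c = jj (cim a c) (cim b c)" using h Wp(5)[of a b c] by simp
  then have "jj (cim a c) (cim b c) = cim b c" by (rule sym)
  then show ?thesis using h le_join_iff[of "cim a c" "cim b c"] by simp
qed
lemma cim_anti2: "a \<in> C \<Longrightarrow> b \<in> C \<Longrightarrow> c \<in> C \<Longrightarrow> lq b c \<Longrightarrow> lq (cim a c) (cim a b)"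
proof -
  assume h: "a \<in> C" "b \<in> C" "c \<in> C" "lq b c"
  have "mm b c = b" using h by (simp add: leq_def)
  then have "cim a b = jj (cim a b) (cim a c)" using h Wp(6)[of a b c] by simp
  also have "\<dots> = jj (cim a c) (cim a b)" using h by (simp only: jcomm[of "cim a b"] cl)
  finally have "jj (cim a c) (cim a b) = cim a b" by (rule sym)
  then show ?thesis using h le_join_iff[of "cim a c" "cim a b"] by simp
qed

definition "G x = imp oo x"
definition "P x = cim x zz"

lemma GP_cl[simp]: "x \<in> C \<Longrightarrow> G x \<in> C" "x \<in> C \<Longrightarrow> P x \<in> C"
  by (simp_all add: G_def P_def)

lemma GP: "y \<in> C \<Longrightarrow> lq y (G (P y))"
  using Wp(8)[of y zz] by (simp add: G_def P_def join_bot)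
lemma PG: "w \<in> C \<Longrightarrow> lq (P (G w)) w"
  using Wp(7)[of oo w] by (simp add: G_def P_def meet_top)
lemma G_meet: "x \<in> C \<Longrightarrow> y \<in> C \<Longrightarrow> G (mm x y) = mm (G x) (G y)"
  by (simp add: G_def Wp(2))
lemma G_top: "G oo = oo" by (simp add: G_def Wp(1))
lemma P_join: "x \<in> C \<Longrightarrow> y \<in> C \<Longrightarrow> P (jj x y) = jj (P x) (P y)"
  by (simp add: P_def Wp(5))
lemma P_bot: "P zz = zz" by (simp add: P_def Wp(4))
lemma G_mono: "x \<in> C \<Longrightarrow> y \<in> C \<Longrightarrow> lq x y \<Longrightarrow> lq (G x) (G y)"
  by (simp add: G_def imp_mono2)
lemma P_mono: "x \<in> C \<Longrightarrow> y \<in> C \<Longrightarrow> lq x y \<Longrightarrow> lq (P x) (P y)"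
  by (simp add: P_def cim_mono1)
lemma adj1: "y \<in> C \<Longrightarrow> z \<in> C \<Longrightarrow> lq (P y) z \<Longrightarrow> lq y (G z)"
  using GP[of y] G_mono[of "P y" z] le_trans[of y "G (P y)" "G z"] by simp
lemma adj2: "y \<in> C \<Longrightarrow> z \<in> C \<Longrightarrow> lq y (G z) \<Longrightarrow> lq (P y) z"
  using PG[of z] P_mono[of y "G z"] le_trans[of "P y" "P (G z)" z] by simp
lemma G_imp: "a \<in> C \<Longrightarrow> b \<in> C \<Longrightarrow> x \<in> C \<Longrightarrow> lq (mm a x) b \<Longrightarrow> lq (G x) (imp a b)"
proof -
  assume h: "a \<in> C" "b \<in> C" "x \<in> C" "lq (mm a x) b"
  have 1: "lq (G x) (imp a x)" unfolding G_def using h imp_anti1[of a oo x] le_top[of a] by simp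
  have "imp a x = mm (imp a a) (imp a x)" using h by (simp add: Wp(1) meet_top)
  also have "\<dots> = imp a (mm a x)" using h by (simp add: Wp(2))
  finally have 2: "lq (imp a x) (imp a b)" using h imp_mono2[of a "mm a x" b] by simp
  show ?thesis using 1 2 h le_trans[of "G x" "imp a x" "imp a b"] by simp
qed
lemma cim_P: "a \<in> C \<Longrightarrow> b \<in> C \<Longrightarrow> m \<in> C \<Longrightarrow> lq a (jj b m) \<Longrightarrow> lq (cim a b) (P m)"
proof -
  assume h: "a \<in> C" "b \<in> C" "m \<in> C" "lq a (jj b m)"
  have 1: "lq (cim a b) (cim (jj b m) b)" using h cim_mono1[of a "jj b m" b] by simp
  have "cim (jj b m) b = jj (cim b b) (cim m b)" using h by (simp add: Wp(5))
  also have "\<dots> = cim m b" using h by (simp add: Wp(4) join_bot)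
  finally have 2: "cim (jj b m) b = cim m b" .
  have 3: "lq (cim m b) (P m)" unfolding P_def using h cim_anti2[of m zz b] bot_le[of b] by simp
  show ?thesis using 1 2 3 h le_trans[of "cim a b" "cim m b" "P m"] by simp
qed

definition "isMt S m \<longleftrightarrow> m \<in> C \<and> (\<forall>x\<in>C. lq x m \<longleftrightarrow> (\<forall>s\<in>S. lq x s))"
definition "isJn S m \<longleftrightarrow> m \<in> C \<and> (\<forall>x\<in>C. lq m x \<longleftrightarrow> (\<forall>s\<in>S. lq s x))"
definition "Mt S = (SOME m. isMt S m)"
definition "Jn S = (SOME m. isJn S m)"

lemma ex_Mt: "finite S \<Longrightarrow> S \<subseteq> C \<Longrightarrow> \<exists>m. isMt S m"
proof (induction S rule: finite_induct)
  case empty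
  then show ?case using le_top unfolding isMt_def by (intro exI[of _ oo]) auto
next
  case (insert a S)
  then obtain m where m: "isMt S m" by auto
  have "isMt (insert a S) (mm a m)" using m insert.prems unfolding isMt_def
    by (auto simp: le_meet)
  then show ?case by blast
qed
lemma ex_Jn: "finite S \<Longrightarrow> S \<subseteq> C \<Longrightarrow> \<exists>m. isJn S m"
proof (induction S rule: finite_induct)
  case empty
  then show ?case using bot_le unfolding isJn_def by (intro exI[of _ zz]) auto
next
  case (insert a S)
  then obtain m where m: "isJn S m" by auto
  have "isJn (insert a S) (jj a m)" using m insert.prems unfolding isJn_def
    by (auto simp: join_le)
  then show ?case by blast
qed
lemma Mt_prop: "finite S \<Longrightarrow> S \<subseteq> C \<Longrightarrow> isMt S (Mt S)"
  unfolding Mt_def using ex_Mt by (rule someI_ex)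
lemma Jn_prop: "finite S \<Longrightarrow> S \<subseteq> C \<Longrightarrow> isJn S (Jn S)"
  unfolding Jn_def using ex_Jn by (rule someI_ex)
lemma isMt_unique: "isMt S m \<Longrightarrow> isMt S m' \<Longrightarrow> m = m'"
  unfolding isMt_def by (meson le_antisym le_refl)
lemma isJn_unique: "isJn S m \<Longrightarrow> isJn S m' \<Longrightarrow> m = m'"
  unfolding isJn_def by (meson le_antisym le_refl)
lemma Mt_eq: "finite S \<Longrightarrow> S \<subseteq> C \<Longrightarrow> isMt S m \<Longrightarrow> Mt S = m"
  using Mt_prop isMt_unique by blast
lemma Jn_eq: "finite S \<Longrightarrow> S \<subseteq> C \<Longrightarrow> isJn S m \<Longrightarrow> Jn S = m"
  using Jn_prop isJn_unique by blast
lemma Mt_C: "finite S \<Longrightarrow> S \<subseteq> C \<Longrightarrow> Mt S \<in> C"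
  using Mt_prop isMt_def by blast
lemma Jn_C: "finite S \<Longrightarrow> S \<subseteq> C \<Longrightarrow> Jn S \<in> C"
  using Jn_prop isJn_def by blast
lemma Mt_le: "finite S \<Longrightarrow> S \<subseteq> C \<Longrightarrow> x \<in> C \<Longrightarrow> lq x (Mt S) \<longleftrightarrow> (\<forall>s\<in>S. lq x s)"
  using Mt_prop isMt_def by blast
lemma Jn_le: "finite S \<Longrightarrow> S \<subseteq> C \<Longrightarrow> x \<in> C \<Longrightarrow> lq (Jn S) x \<longleftrightarrow> (\<forall>s\<in>S. lq s x)"
  using Jn_prop isJn_def by blast
lemma Mt_lb: "finite S \<Longrightarrow> S \<subseteq> C \<Longrightarrow> s \<in> S \<Longrightarrow> lq (Mt S) s"
  using Mt_le[of S "Mt S"] Mt_C le_refl by blast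
lemma Jn_ub: "finite S \<Longrightarrow> S \<subseteq> C \<Longrightarrow> s \<in> S \<Longrightarrow> lq s (Jn S)"
  using Jn_le[of S "Jn S"] Jn_C le_refl by blast

lemma Mt_insert: "finite S \<Longrightarrow> S \<subseteq> C \<Longrightarrow> a \<in> C \<Longrightarrow> Mt (insert a S) = mm a (Mt S)"
  by (rule Mt_eq) (auto simp: isMt_def le_meet Mt_le Mt_C)
lemma Jn_insert: "finite S \<Longrightarrow> S \<subseteq> C \<Longrightarrow> a \<in> C \<Longrightarrow> Jn (insert a S) = jj a (Jn S)"
  by (rule Jn_eq) (auto simp: isJn_def join_le Jn_le Jn_C)
lemma Mt_empty: "Mt {} = oo"
  by (rule Mt_eq) (auto simp: isMt_def le_top)
lemma Jn_empty: "Jn {} = zz"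
  by (rule Jn_eq) (auto simp: isJn_def bot_le)
lemma Mt_single: "a \<in> C \<Longrightarrow> Mt {a} = a"
  by (rule Mt_eq) (auto simp: isMt_def)
lemma Jn_single: "a \<in> C \<Longrightarrow> Jn {a} = a"
  by (rule Jn_eq) (auto simp: isJn_def)
lemma Mt_union: "finite S \<Longrightarrow> S \<subseteq> C \<Longrightarrow> finite S' \<Longrightarrow> S' \<subseteq> C \<Longrightarrow> Mt (S \<union> S') = mm (Mt S) (Mt S')"
  by (rule Mt_eq) (auto simp: isMt_def le_meet Mt_le Mt_C)
lemma Jn_union: "finite S \<Longrightarrow> S \<subseteq> C \<Longrightarrow> finite S' \<Longrightarrow> S' \<subseteq> C \<Longrightarrow> Jn (S \<union> S') = jj (Jn S) (Jn S')"
  by (rule Jn_eq) (auto simp: isJn_def join_le Jn_le Jn_C)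
lemma Jn_UN: "finite I \<Longrightarrow> (\<And>i. i \<in> I \<Longrightarrow> finite (Y i) \<and> Y i \<subseteq> C) \<Longrightarrow>
   Jn ((\<lambda>i. Jn (Y i)) ` I) = Jn (\<Union>i\<in>I. Y i)"
proof -
  assume h: "finite I" "\<And>i. i \<in> I \<Longrightarrow> finite (Y i) \<and> Y i \<subseteq> C"
  have f: "finite (\<Union>i\<in>I. Y i)" "(\<Union>i\<in>I. Y i) \<subseteq> C" using h by auto
  have c: "(\<lambda>i. Jn (Y i)) ` I \<subseteq> C" using h Jn_C by auto
  show ?thesis
    apply (rule Jn_eq)
    using h(1) apply simp
    using c apply simp
    unfolding isJn_def using f h Jn_C[OF f] Jn_le by auto
qed

lemma dist_Jn: "finite Y \<Longrightarrow> Y \<subseteq> C \<Longrightarrow> x \<in> C \<Longrightarrow> mm x (Jn Y) = Jn (mm x ` Y)"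
proof (induction Y rule: finite_induct)
  case empty
  then show ?case by (simp add: Jn_empty mcomm[of x zz] botm)
next
  case (insert a Y)
  have "mm x (Jn (insert a Y)) = mm x (jj a (Jn Y))" using insert by (simp add: Jn_insert)
  also have "\<dots> = jj (mm x a) (mm x (Jn Y))" using insert by (simp add: dist Jn_C)
  also have "\<dots> = jj (mm x a) (Jn (mm x ` Y))" using insert by simp
  also have "\<dots> = Jn (insert (mm x a) (mm x ` Y))" using insert by (subst Jn_insert) auto
  finally show ?case by simp
qed
lemma dist_Mt: "finite Y \<Longrightarrow> Y \<subseteq> C \<Longrightarrow> x \<in> C \<Longrightarrow> jj x (Mt Y) = Mt (jj x ` Y)"
proof (induction Y rule: finite_induct)
  case empty
  then show ?case by (simp add: Mt_empty jcomm[of x oo] topj)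
next
  case (insert a Y)
  have "jj x (Mt (insert a Y)) = jj x (mm a (Mt Y))" using insert by (simp add: Mt_insert)
  also have "\<dots> = mm (jj x a) (jj x (Mt Y))" using insert by (simp add: dist2 Mt_C)
  also have "\<dots> = mm (jj x a) (Mt (jj x ` Y))" using insert by simp
  also have "\<dots> = Mt (insert (jj x a) (jj x ` Y))" using insert by (subst Mt_insert) auto
  finally show ?case by simp
qed

end

locale whbX = whb +
  fixes X
  assumes finX: "finite X" and XC: "X \<subseteq> C"
begin

definition "D = (\<lambda>F. Jn (Mt ` F)) ` Pow (Pow X)"

lemma finPX: "F \<subseteq> Pow X \<Longrightarrow> finite F" using finX
  by (meson finite_Pow_iff finite_subset)
lemma MtF_C: "F \<subseteq> Pow X \<Longrightarrow> Mt ` F \<subseteq> C"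
proof
  fix y assume "F \<subseteq> Pow X" "y \<in> Mt ` F"
  then obtain S where S: "S \<subseteq> X" "y = Mt S" by auto
  have "finite S" using S finX finite_subset by blast
  then show "y \<in> C" using S XC Mt_C by blast
qed

lemma D_fin: "finite D" unfolding D_def using finX by simp
lemma D_C: "D \<subseteq> C" unfolding D_def using finPX MtF_C Jn_C by auto
lemma X_D: "X \<subseteq> D"
proof
  fix x assume x: "x \<in> X"
  have "Jn (Mt ` {{x}}) = x" using x XC by (auto simp: Mt_single Jn_single)
  moreover have "{{x}} \<in> Pow (Pow X)" using x by auto
  ultimately show "x \<in> D" unfolding D_def by (rule image_eqI[OF sym])
qed
lemma zz_D: "zz \<in> D" unfolding D_def using Jn_empty by (metis Pow_bottom image_empty image_eqI)
lemma oo_D: "oo \<in> D"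
proof -
  have "Jn (Mt ` {{}}) = oo" by (simp add: Mt_empty Jn_single)
  moreover have "{{}} \<in> Pow (Pow X)" by auto
  ultimately show ?thesis unfolding D_def by (rule image_eqI[OF sym])
qed
lemma D_jj: "a \<in> D \<Longrightarrow> b \<in> D \<Longrightarrow> jj a b \<in> D"
proof -
  assume "a \<in> D" "b \<in> D"
  then obtain F F' where F: "F \<subseteq> Pow X" "F' \<subseteq> Pow X" and ab: "a = Jn (Mt ` F)" "b = Jn (Mt ` F')"
    unfolding D_def by auto
  have "jj a b = Jn (Mt ` (F \<union> F'))" using ab F finPX MtF_C by (simp add: image_Un Jn_union)
  moreover have "F \<union> F' \<in> Pow (Pow X)" using F by auto
  ultimately show ?thesis unfolding D_def by (rule image_eqI)
qed
lemma D_mm: "a \<in> D \<Longrightarrow> b \<in> D \<Longrightarrow> mm a b \<in> D"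
proof -
  assume "a \<in> D" "b \<in> D"
  then obtain F F' where F: "F \<subseteq> Pow X" "F' \<subseteq> Pow X" and ab: "a = Jn (Mt ` F)" "b = Jn (Mt ` F')"
    unfolding D_def by auto
  let ?Y = "Mt ` F" and ?Y' = "Mt ` F'"
  have fY: "finite ?Y" "?Y \<subseteq> C" "finite ?Y'" "?Y' \<subseteq> C" using F finPX MtF_C by auto
  have aC: "a \<in> C" and bC: "b \<in> C" using ab fY Jn_C by auto
  have "mm a b = mm b a" using aC bC by (rule mcomm)
  also have "\<dots> = Jn (mm b ` ?Y)" using dist_Jn[of ?Y b] fY bC ab(1) by simp
  also have "mm b ` ?Y = (\<lambda>y. Jn (mm y ` ?Y')) ` ?Y"
  proof (rule image_cong[OF refl])
    fix y assume "y \<in> ?Y"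
    then have yC: "y \<in> C" using fY by auto
    have "mm b y = mm y b" using bC yC by (rule mcomm)
    also have "\<dots> = Jn (mm y ` ?Y')" using dist_Jn[of ?Y' y] fY yC ab(2) by simp
    finally show "mm b y = Jn (mm y ` ?Y')" .
  qed
  also have "Jn \<dots> = Jn (\<Union>y\<in>?Y. mm y ` ?Y')"
    by (rule Jn_UN) (use fY in \<open>auto simp: image_subset_iff\<close>)
  also have "(\<Union>y\<in>?Y. mm y ` ?Y') = Mt ` {S \<union> S' | S S'. S \<in> F \<and> S' \<in> F'}"
  proof -
    have e: "S \<in> F \<Longrightarrow> S' \<in> F' \<Longrightarrow> mm (Mt S) (Mt S') = Mt (S \<union> S')" for S S'
    proof -
      assume "S \<in> F" "S' \<in> F'"
      then have "S \<subseteq> X" "S' \<subseteq> X" using F by auto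
      then have "S \<subseteq> C" "S' \<subseteq> C" "finite S" "finite S'" using XC finX finite_subset by blast+
      then show ?thesis by (simp add: Mt_union)
    qed
    have "(\<Union>y\<in>?Y. mm y ` ?Y') = (\<Union>S\<in>F. (\<lambda>S'. mm (Mt S) (Mt S')) ` F')"
      by (simp add: image_image)
    also have "\<dots> = (\<Union>S\<in>F. (\<lambda>S'. Mt (S \<union> S')) ` F')"
      using e by (intro SUP_cong image_cong) auto
    also have "\<dots> = Mt ` (\<Union>S\<in>F. (\<lambda>S'. S \<union> S') ` F')" by (simp add: image_UN image_image)
    also have "(\<Union>S\<in>F. (\<lambda>S'. S \<union> S') ` F') = {S \<union> S' | S S'. S \<in> F \<and> S' \<in> F'}" by auto
    finally show ?thesis .
  qed
  finally have "mm a b = Jn (Mt ` {S \<union> S' | S S'. S \<in> F \<and> S' \<in> F'})" .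
  moreover have "{S \<union> S' | S S'. S \<in> F \<and> S' \<in> F'} \<in> Pow (Pow X)" using F by auto
  ultimately show ?thesis unfolding D_def by (rule image_eqI)
qed
lemma D_Jn: "Z \<subseteq> D \<Longrightarrow> Jn Z \<in> D"
proof -
  assume Z: "Z \<subseteq> D"
  have "finite Z" using Z D_fin finite_subset by blast
  then show ?thesis using Z
  proof (induction Z rule: finite_induct)
    case empty then show ?case by (simp add: Jn_empty zz_D)
  next
    case (insert a Z)
    have "a \<in> C" "finite Z" "Z \<subseteq> C" using insert D_C by auto
    then have "Jn (insert a Z) = jj a (Jn Z)" by (simp add: Jn_insert)
    then show ?case using insert D_jj by simp
  qed
qed
lemma D_Mt: "Z \<subseteq> D \<Longrightarrow> Mt Z \<in> D"
proof -
  assume Z: "Z \<subseteq> D"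
  have "finite Z" using Z D_fin finite_subset by blast
  then show ?thesis using Z
  proof (induction Z rule: finite_induct)
    case empty then show ?case by (simp add: Mt_empty oo_D)
  next
    case (insert a Z)
    have "a \<in> C" "finite Z" "Z \<subseteq> C" using insert D_C by auto
    then have "Mt (insert a Z) = mm a (Mt Z)" by (simp add: Mt_insert)
    then show ?case using insert D_mm by simp
  qed
qed
lemma DC: "a \<in> D \<Longrightarrow> a \<in> C" using D_C by auto
lemma finD: "Z \<subseteq> D \<Longrightarrow> finite Z" using D_fin finite_subset by blast

definition "GD x = Jn {d\<in>D. lq d (G x)}"
definition "PD y = Mt {c\<in>D. lq (P y) c}"
definition "HD a b = Jn {d\<in>D. lq (mm a d) b}"
definition "SD a b = Mt {d\<in>D. lq a (jj b d)}"

lemma subD: "{d\<in>D. Q d} \<subseteq> D" by auto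
lemma subDC: "{d\<in>D. Q d} \<subseteq> C" using D_C by auto
lemma finsubD: "finite {d\<in>D. Q d}" using D_fin by auto

lemma GD_D: "GD x \<in> D" unfolding GD_def by (rule D_Jn[OF subD])
lemma PD_D: "PD x \<in> D" unfolding PD_def by (rule D_Mt[OF subD])
lemma HD_D: "HD a b \<in> D" unfolding HD_def by (rule D_Jn[OF subD])
lemma SD_D: "SD a b \<in> D" unfolding SD_def by (rule D_Mt[OF subD])

lemma GD_char: "d \<in> D \<Longrightarrow> x \<in> C \<Longrightarrow> lq d (GD x) \<longleftrightarrow> lq d (G x)"
proof
  assume h: "d \<in> D" "x \<in> C"
  have le: "lq (GD x) (G x)" unfolding GD_def using Jn_le[OF finsubD[where Q="\<lambda>d. lq d (G x)"] subDC[where Q="\<lambda>d. lq d (G x)"], of "G x"] h by auto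
  show "lq d (GD x) \<Longrightarrow> lq d (G x)" using le_trans[OF DC[OF h(1)] DC[OF GD_D] GP_cl(1)[OF h(2)]] le by blast
  show "lq d (G x) \<Longrightarrow> lq d (GD x)" unfolding GD_def using Jn_ub[OF finsubD[where Q="\<lambda>d. lq d (G x)"] subDC[where Q="\<lambda>d. lq d (G x)"]] h by blast
qed
lemma PD_char: "c \<in> D \<Longrightarrow> y \<in> C \<Longrightarrow> lq (PD y) c \<longleftrightarrow> lq (P y) c"
proof
  assume h: "c \<in> D" "y \<in> C"
  have le: "lq (P y) (PD y)" unfolding PD_def using Mt_le[OF finsubD[where Q="\<lambda>c. lq (P y) c"] subDC[where Q="\<lambda>c. lq (P y) c"], of "P y"] h by auto
  show "lq (PD y) c \<Longrightarrow> lq (P y) c" using le_trans[OF GP_cl(2)[OF h(2)] DC[OF PD_D] DC[OF h(1)]] le by blast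
  show "lq (P y) c \<Longrightarrow> lq (PD y) c" unfolding PD_def using Mt_lb[OF finsubD[where Q="\<lambda>c. lq (P y) c"] subDC[where Q="\<lambda>c. lq (P y) c"]] h by blast
qed
lemma HD_char: "a \<in> D \<Longrightarrow> b \<in> D \<Longrightarrow> d \<in> D \<Longrightarrow> lq d (HD a b) \<longleftrightarrow> lq (mm a d) b"
proof
  assume h: "a \<in> D" "b \<in> D" "d \<in> D"
  note hc = DC[OF h(1)] DC[OF h(2)] DC[OF h(3)]
  let ?Z = "{d\<in>D. lq (mm a d) b}"
  have "mm a (HD a b) = Jn (mm a ` ?Z)" unfolding HD_def by (rule dist_Jn[OF finsubD[where Q="\<lambda>d. lq (mm a d) b"] subDC[where Q="\<lambda>d. lq (mm a d) b"] hc(1)])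
  moreover have "lq (Jn (mm a ` ?Z)) b"
  proof -
    have s: "mm a ` ?Z \<subseteq> C" using hc DC by auto
    have f: "finite (mm a ` ?Z)" using finsubD by (rule finite_imageI)
    show ?thesis using Jn_le[OF f s hc(2)] by blast
  qed
  ultimately have 1: "lq (mm a (HD a b)) b" by simp
  show "lq d (HD a b) \<Longrightarrow> lq (mm a d) b"
  proof -
    assume "lq d (HD a b)"
    then have "lq (mm a d) (mm a (HD a b))" using meet_mono[OF hc(1) hc(1) hc(3) DC[OF HD_D]] le_refl[OF hc(1)] by blast
    then show ?thesis using le_trans[OF cl(3)[OF hc(1) hc(3)] cl(3)[OF hc(1) DC[OF HD_D]] hc(2) _ 1] by blast
  qed
  show "lq (mm a d) b \<Longrightarrow> lq d (HD a b)" unfolding HD_def using Jn_ub[OF finsubD[where Q="\<lambda>d. lq (mm a d) b"] subDC[where Q="\<lambda>d. lq (mm a d) b"]] h by blast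
qed
lemma SD_char: "a \<in> D \<Longrightarrow> b \<in> D \<Longrightarrow> d \<in> D \<Longrightarrow> lq (SD a b) d \<longleftrightarrow> lq a (jj b d)"
proof
  assume h: "a \<in> D" "b \<in> D" "d \<in> D"
  note hc = DC[OF h(1)] DC[OF h(2)] DC[OF h(3)]
  let ?Z = "{d\<in>D. lq a (jj b d)}"
  have "jj b (SD a b) = Mt (jj b ` ?Z)" unfolding SD_def by (rule dist_Mt[OF finsubD[where Q="\<lambda>d. lq a (jj b d)"] subDC[where Q="\<lambda>d. lq a (jj b d)"] hc(2)])
  moreover have "lq a (Mt (jj b ` ?Z))"
  proof -
    have s: "jj b ` ?Z \<subseteq> C" using hc DC by auto
    have f: "finite (jj b ` ?Z)" using finsubD by (rule finite_imageI)
    show ?thesis using Mt_le[OF f s hc(1)] by blast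
  qed
  ultimately have 1: "lq a (jj b (SD a b))" by simp
  show "lq (SD a b) d \<Longrightarrow> lq a (jj b d)"
  proof -
    assume "lq (SD a b) d"
    then have "lq (jj b (SD a b)) (jj b d)" using join_mono[OF hc(2) hc(2) DC[OF SD_D] hc(3)] le_refl[OF hc(2)] by blast
    then show ?thesis using le_trans[OF hc(1) cl(4)[OF hc(2) DC[OF SD_D]] cl(4)[OF hc(2) hc(3)] 1] by blast
  qed
  show "lq a (jj b d) \<Longrightarrow> lq (SD a b) d" unfolding SD_def using Mt_lb[OF finsubD[where Q="\<lambda>d. lq a (jj b d)"] subDC[where Q="\<lambda>d. lq a (jj b d)"]] h by blast
qed

lemma D_eq_below: "x \<in> D \<Longrightarrow> y \<in> D \<Longrightarrow> (\<And>d. d \<in> D \<Longrightarrow> lq d x \<longleftrightarrow> lq d y) \<Longrightarrow> x = y"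
proof -
  assume h: "x \<in> D" "y \<in> D" "\<And>d. d \<in> D \<Longrightarrow> lq d x \<longleftrightarrow> lq d y"
  have "lq x y" using h(3)[OF h(1)] le_refl[OF DC[OF h(1)]] by blast
  moreover have "lq y x" using h(3)[OF h(2)] le_refl[OF DC[OF h(2)]] by blast
  ultimately show "x = y" using le_antisym[OF DC[OF h(1)] DC[OF h(2)]] by blast
qed
lemma D_eq_above: "x \<in> D \<Longrightarrow> y \<in> D \<Longrightarrow> (\<And>d. d \<in> D \<Longrightarrow> lq x d \<longleftrightarrow> lq y d) \<Longrightarrow> x = y"
proof -
  assume h: "x \<in> D" "y \<in> D" "\<And>d. d \<in> D \<Longrightarrow> lq x d \<longleftrightarrow> lq y d"
  have "lq y x" using h(3)[OF h(1)] le_refl[OF DC[OF h(1)]] by blast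
  moreover have "lq x y" using h(3)[OF h(2)] le_refl[OF DC[OF h(2)]] by blast
  ultimately show "x = y" using le_antisym[OF DC[OF h(1)] DC[OF h(2)]] by blast
qed

lemma DD[simp]: "a \<in> D \<Longrightarrow> b \<in> D \<Longrightarrow> mm a b \<in> D" "a \<in> D \<Longrightarrow> b \<in> D \<Longrightarrow> jj a b \<in> D"
  "zz \<in> D" "oo \<in> D" "GD x \<in> D" "PD x \<in> D" "HD a b \<in> D" "SD a b \<in> D"
  by (simp_all add: D_mm D_jj zz_D oo_D GD_D PD_D HD_D SD_D)

lemma GD_meet: "x \<in> C \<Longrightarrow> y \<in> C \<Longrightarrow> GD (mm x y) = mm (GD x) (GD y)"
proof (rule D_eq_below)
  fix d assume h: "x \<in> C" "y \<in> C" "d \<in> D"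
  have "lq d (GD (mm x y)) \<longleftrightarrow> lq d (G (mm x y))" using h by (simp add: GD_char)
  also have "\<dots> \<longleftrightarrow> lq d (G x) \<and> lq d (G y)" using h DC[OF h(3)] by (simp add: G_meet le_meet)
  also have "\<dots> \<longleftrightarrow> lq d (GD x) \<and> lq d (GD y)" using h by (simp add: GD_char)
  also have "\<dots> \<longleftrightarrow> lq d (mm (GD x) (GD y))" using h DC[OF h(3)] DC[OF GD_D] by (simp add: le_meet)
  finally show "lq d (GD (mm x y)) \<longleftrightarrow> lq d (mm (GD x) (GD y))" .
qed simp_all
lemma GD_top: "GD oo = oo"
proof (rule D_eq_below)
  fix d assume h: "d \<in> D"
  show "lq d (GD oo) \<longleftrightarrow> lq d oo" using h DC[OF h] by (simp add: GD_char G_top)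
qed simp_all
lemma PD_join: "x \<in> C \<Longrightarrow> y \<in> C \<Longrightarrow> PD (jj x y) = jj (PD x) (PD y)"
proof (rule D_eq_above)
  fix d assume h: "x \<in> C" "y \<in> C" "d \<in> D"
  have "lq (PD (jj x y)) d \<longleftrightarrow> lq (P (jj x y)) d" using h by (simp add: PD_char)
  also have "\<dots> \<longleftrightarrow> lq (P x) d \<and> lq (P y) d" using h DC[OF h(3)] by (simp add: P_join join_le)
  also have "\<dots> \<longleftrightarrow> lq (PD x) d \<and> lq (PD y) d" using h by (simp add: PD_char)
  also have "\<dots> \<longleftrightarrow> lq (jj (PD x) (PD y)) d" using h DC[OF h(3)] DC[OF PD_D] by (simp add: join_le)
  finally show "lq (PD (jj x y)) d \<longleftrightarrow> lq (jj (PD x) (PD y)) d" .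
qed simp_all
lemma PD_bot: "PD zz = zz"
proof (rule D_eq_above)
  fix d assume h: "d \<in> D"
  show "lq (PD zz) d \<longleftrightarrow> lq zz d" using h DC[OF h] by (simp add: PD_char P_bot)
qed simp_all

lemma HD_self: "a \<in> D \<Longrightarrow> HD a a = oo"
proof (rule D_eq_below)
  fix d assume h: "a \<in> D" "d \<in> D"
  show "lq d (HD a a) \<longleftrightarrow> lq d oo" using h DC[OF h(1)] DC[OF h(2)] by (simp add: HD_char meet_le1 le_top)
qed simp_all
lemma HD_meet2: "a \<in> D \<Longrightarrow> b \<in> D \<Longrightarrow> c \<in> D \<Longrightarrow> HD a (mm b c) = mm (HD a b) (HD a c)"
proof (rule D_eq_below)
  fix d assume h: "a \<in> D" "b \<in> D" "c \<in> D" "d \<in> D"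
  note hc = DC[OF h(1)] DC[OF h(2)] DC[OF h(3)] DC[OF h(4)]
  show "lq d (HD a (mm b c)) \<longleftrightarrow> lq d (mm (HD a b) (HD a c))"
    using h hc DC[OF HD_D] by (simp add: HD_char le_meet)
qed simp_all
lemma mm_jj_r: "a \<in> C \<Longrightarrow> b \<in> C \<Longrightarrow> d \<in> C \<Longrightarrow> mm (jj a b) d = jj (mm a d) (mm b d)"
proof -
  assume h: "a \<in> C" "b \<in> C" "d \<in> C"
  have "mm (jj a b) d = mm d (jj a b)" using h by (intro mcomm) simp_all
  also have "\<dots> = jj (mm d a) (mm d b)" using h by (rule_tac dist) simp_all
  also have "mm d a = mm a d" using h by (intro mcomm) simp_all
  also have "mm d b = mm b d" using h by (intro mcomm) simp_all
  finally show ?thesis .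
qed
lemma jj_mm_r: "b \<in> C \<Longrightarrow> c \<in> C \<Longrightarrow> d \<in> C \<Longrightarrow> jj (mm b c) d = mm (jj b d) (jj c d)"
proof -
  assume h: "b \<in> C" "c \<in> C" "d \<in> C"
  have "jj (mm b c) d = jj d (mm b c)" using h by (intro jcomm) simp_all
  also have "\<dots> = mm (jj d b) (jj d c)" using h by (rule_tac dist2) simp_all
  also have "jj d b = jj b d" using h by (intro jcomm) simp_all
  also have "jj d c = jj c d" using h by (intro jcomm) simp_all
  finally show ?thesis .
qed
lemma HD_join1: "a \<in> D \<Longrightarrow> b \<in> D \<Longrightarrow> c \<in> D \<Longrightarrow> HD (jj a b) c = mm (HD a c) (HD b c)"
proof (rule D_eq_below)
  fix d assume h: "a \<in> D" "b \<in> D" "c \<in> D" "d \<in> D"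
  note hc = DC[OF h(1)] DC[OF h(2)] DC[OF h(3)] DC[OF h(4)]
  have "lq d (HD (jj a b) c) \<longleftrightarrow> lq (mm (jj a b) d) c" using h by (simp add: HD_char)
  also have "\<dots> \<longleftrightarrow> lq (jj (mm a d) (mm b d)) c" using hc by (simp add: mm_jj_r)
  also have "\<dots> \<longleftrightarrow> lq d (HD a c) \<and> lq d (HD b c)" using h hc by (simp add: join_le HD_char)
  also have "\<dots> \<longleftrightarrow> lq d (mm (HD a c) (HD b c))" using hc DC[OF HD_D] by (simp add: le_meet)
  finally show "lq d (HD (jj a b) c) \<longleftrightarrow> lq d (mm (HD a c) (HD b c))" .
qed simp_all
lemma HD_trans: "a \<in> D \<Longrightarrow> b \<in> D \<Longrightarrow> c \<in> D \<Longrightarrow> lq (mm (HD a b) (HD b c)) (HD a c)"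
proof -
  assume h: "a \<in> D" "b \<in> D" "c \<in> D"
  note hc = DC[OF h(1)] DC[OF h(2)] DC[OF h(3)]
  define h1 where "h1 = HD a b"
  define h2 where "h2 = HD b c"
  have hh: "h1 \<in> D" "h2 \<in> D" "h1 \<in> C" "h2 \<in> C" unfolding h1_def h2_def using DC by simp_all
  have 1: "lq (mm a h1) b" using HD_char[OF h(1) h(2) hh(1)] le_refl[OF hh(3)] unfolding h1_def by simp
  have 2: "lq (mm b h2) c" using HD_char[OF h(2) h(3) hh(2)] le_refl[OF hh(4)] unfolding h2_def by simp
  have "mm a (mm h1 h2) = mm (mm a h1) h2" using hc hh by (intro massoc) simp_all
  moreover have "lq (mm (mm a h1) h2) (mm b h2)" using meet_mono[OF _ hc(2) hh(4) hh(4) 1 le_refl[OF hh(4)]] hc hh by simp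
  ultimately have "lq (mm a (mm h1 h2)) c" using le_trans[OF _ _ hc(3) _ 2] hc hh by simp
  then have "lq (mm h1 h2) (HD a c)" using HD_char[OF h(1) h(3)] h hh by simp
  then show ?thesis unfolding h1_def h2_def .
qed
lemma HD_top1: "x \<in> D \<Longrightarrow> HD oo x = x"
proof (rule D_eq_below)
  fix d assume h: "x \<in> D" "d \<in> D"
  show "lq d (HD oo x) \<longleftrightarrow> lq d x" using h DC[OF h(2)] by (simp add: HD_char meet_top)
qed simp_all

lemma SD_self: "a \<in> D \<Longrightarrow> SD a a = zz"
proof (rule D_eq_above)
  fix d assume h: "a \<in> D" "d \<in> D"
  show "lq (SD a a) d \<longleftrightarrow> lq zz d" using h DC[OF h(1)] DC[OF h(2)] by (simp add: SD_char join_ge1 bot_le)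
qed simp_all
lemma SD_join1: "a \<in> D \<Longrightarrow> b \<in> D \<Longrightarrow> c \<in> D \<Longrightarrow> SD (jj a b) c = jj (SD a c) (SD b c)"
proof (rule D_eq_above)
  fix d assume h: "a \<in> D" "b \<in> D" "c \<in> D" "d \<in> D"
  note hc = DC[OF h(1)] DC[OF h(2)] DC[OF h(3)] DC[OF h(4)]
  show "lq (SD (jj a b) c) d \<longleftrightarrow> lq (jj (SD a c) (SD b c)) d"
    using h hc DC[OF SD_D] by (simp add: SD_char join_le)
qed simp_all
lemma SD_meet2: "a \<in> D \<Longrightarrow> b \<in> D \<Longrightarrow> c \<in> D \<Longrightarrow> SD a (mm b c) = jj (SD a b) (SD a c)"
proof (rule D_eq_above)
  fix d assume h: "a \<in> D" "b \<in> D" "c \<in> D" "d \<in> D"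
  note hc = DC[OF h(1)] DC[OF h(2)] DC[OF h(3)] DC[OF h(4)]
  have "lq (SD a (mm b c)) d \<longleftrightarrow> lq a (jj (mm b c) d)" using h by (simp add: SD_char)
  also have "\<dots> \<longleftrightarrow> lq a (mm (jj b d) (jj c d))" using hc by (simp add: jj_mm_r)
  also have "\<dots> \<longleftrightarrow> lq (SD a b) d \<and> lq (SD a c) d" using h hc by (simp add: le_meet SD_char)
  also have "\<dots> \<longleftrightarrow> lq (jj (SD a b) (SD a c)) d" using hc DC[OF SD_D] by (simp add: join_le)
  finally show "lq (SD a (mm b c)) d \<longleftrightarrow> lq (jj (SD a b) (SD a c)) d" .
qed simp_all
lemma SD_trans: "a \<in> D \<Longrightarrow> b \<in> D \<Longrightarrow> c \<in> D \<Longrightarrow> lq (SD a c) (jj (SD a b) (SD b c))"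
proof -
  assume h: "a \<in> D" "b \<in> D" "c \<in> D"
  note hc = DC[OF h(1)] DC[OF h(2)] DC[OF h(3)]
  define s1 where "s1 = SD a b"
  define s2 where "s2 = SD b c"
  have ss: "s1 \<in> D" "s2 \<in> D" "s1 \<in> C" "s2 \<in> C" unfolding s1_def s2_def using DC by simp_all
  define e where "e = jj s1 s2"
  have e: "e \<in> D" "e \<in> C" unfolding e_def using ss by simp_all
  have 1: "lq a (jj b s1)" using SD_char[OF h(1) h(2) ss(1)] le_refl[OF ss(3)] unfolding s1_def by simp
  have 2: "lq b (jj c s2)" using SD_char[OF h(2) h(3) ss(2)] le_refl[OF ss(4)] unfolding s2_def by simp
  have s1e: "lq s1 e" unfolding e_def using ss join_ge1 by simp
  have s2e: "lq s2 e" unfolding e_def using ss join_ge2 by simp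
  have 3: "lq (jj c s2) (jj c e)" using join_mono[OF hc(3) hc(3) ss(4) e(2) le_refl[OF hc(3)] s2e] .
  have 4: "lq b (jj c e)" using le_trans[OF hc(2) _ _ 2 3] hc ss e by simp
  have 5: "lq s1 (jj c e)" using le_trans[OF ss(3) e(2) _ s1e join_ge2[OF hc(3) e(2)]] hc e by simp
  have "lq (jj b s1) (jj c e)" using join_le[of "jj c e" b s1] 4 5 hc ss e by simp
  then have "lq a (jj c e)" using le_trans[OF hc(1) _ _ 1] hc ss e by simp
  then have "lq (SD a c) e" using SD_char[OF h(1) h(3) e(1)] by simp
  then show ?thesis unfolding e_def s1_def s2_def .
qed
lemma SD_bot2: "x \<in> D \<Longrightarrow> SD x zz = x"
proof (rule D_eq_above)
  fix d assume h: "x \<in> D" "d \<in> D"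
  show "lq (SD x zz) d \<longleftrightarrow> lq x d" using h DC[OF h(2)] by (simp add: SD_char join_bot)
qed simp_all

lemma PD_GD: "w \<in> D \<Longrightarrow> lq (PD (GD w)) w"
proof -
  assume h: "w \<in> D"
  have "lq (GD w) (G w)" using GD_char[OF GD_D[of w] DC[OF h]] le_refl[OF DC[OF GD_D[of w]]] by simp
  then have "lq (P (GD w)) w" using adj2[OF DC[OF GD_D] DC[OF h]] by simp
  then show ?thesis using PD_char[OF h DC[OF GD_D]] by simp
qed
lemma GD_PD: "y \<in> D \<Longrightarrow> lq y (GD (PD y))"
proof -
  assume h: "y \<in> D"
  have "lq (P y) (PD y)" using PD_char[OF PD_D[of y] DC[OF h]] le_refl[OF DC[OF PD_D[of y]]] by simp
  then have "lq y (G (PD y))" using adj1[OF DC[OF h] DC[OF PD_D]] by simp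
  then show ?thesis using GD_char[OF h DC[OF PD_D]] by simp
qed

definition "Bst = \<lparr>car = D, mt = mm, jn = jj, im = (\<lambda>a b. GD (HD a b)),
   coim = (\<lambda>a b. PD (SD a b)), zr = zz, on = oo\<rparr>"

lemma Bst_simps: "car Bst = D" "mt Bst = mm" "jn Bst = jj" "im Bst = (\<lambda>a b. GD (HD a b))"
  "coim Bst = (\<lambda>a b. PD (SD a b))" "zr Bst = zz" "on Bst = oo"
  by (simp_all add: Bst_def)
lemma leqB: "leq Bst x y = lq x y" by (simp add: leq_def Bst_simps)

lemma whbB: "whb_algebra Bst"
proof -
  have f1: "\<forall>a\<in>D. \<forall>b\<in>D. mm a b \<in> D \<and> jj a b \<in> D" by simp
  have f2: "\<forall>a\<in>D. \<forall>b\<in>D. mm a b = mm b a \<and> jj a b = jj b a"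
    by (intro ballI conjI) (rule mcomm jcomm, simp_all add: DC)+
  have f3: "\<forall>a\<in>D. \<forall>b\<in>D. \<forall>c\<in>D. mm a (mm b c) = mm (mm a b) c \<and> jj a (jj b c) = jj (jj a b) c"
    by (intro ballI conjI) (rule massoc jassoc, simp_all add: DC)+
  have f4: "\<forall>a\<in>D. \<forall>b\<in>D. mm a (jj a b) = a \<and> jj a (mm a b) = a"
    by (intro ballI conjI) (rule abs1 abs2, simp_all add: DC)+
  have f5: "\<forall>a\<in>D. \<forall>b\<in>D. \<forall>c\<in>D. mm a (jj b c) = jj (mm a b) (mm a c)"
    by (intro ballI conjI) (rule dist, simp_all add: DC)+
  have f6: "\<forall>a\<in>D. mm zz a = zz \<and> jj oo a = oo"
    by (intro ballI conjI) (rule botm topj, simp_all add: DC)+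
  have g1: "\<forall>a\<in>D. \<forall>b\<in>D. GD (HD a b) \<in> D \<and> PD (SD a b) \<in> D" by simp
  have g2: "\<forall>a\<in>D. GD (HD a a) = oo" by (simp add: HD_self GD_top)
  have g3: "\<forall>a\<in>D. \<forall>b\<in>D. \<forall>c\<in>D. GD (HD a (mm b c)) = mm (GD (HD a b)) (GD (HD a c))"
    by (simp add: HD_meet2 GD_meet DC)
  have g4: "\<forall>a\<in>D. \<forall>b\<in>D. \<forall>c\<in>D. GD (HD (jj a b) c) = mm (GD (HD a c)) (GD (HD b c))"
    by (simp add: HD_join1 GD_meet DC)
  have g5: "\<forall>a\<in>D. \<forall>b\<in>D. \<forall>c\<in>D. lq (mm (GD (HD a b)) (GD (HD b c))) (GD (HD a c))"
  proof (intro ballI)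
    fix a b c assume h: "a \<in> D" "b \<in> D" "c \<in> D"
    have "mm (GD (HD a b)) (GD (HD b c)) = GD (mm (HD a b) (HD b c))" using DC by (simp add: GD_meet)
    moreover have "lq (GD (mm (HD a b) (HD b c))) (GD (HD a c))"
    proof -
      have "lq (mm (HD a b) (HD b c)) (HD a c)" using h by (rule HD_trans)
      then have "lq (G (mm (HD a b) (HD b c))) (G (HD a c))" using DC by (simp add: G_mono)
      moreover have "lq (GD (mm (HD a b) (HD b c))) (G (mm (HD a b) (HD b c)))"
        using GD_char[of "GD (mm (HD a b) (HD b c))" "mm (HD a b) (HD b c)"] DC le_refl by simp
      ultimately have "lq (GD (mm (HD a b) (HD b c))) (G (HD a c))"
        using le_trans[of "GD (mm (HD a b) (HD b c))" "G (mm (HD a b) (HD b c))" "G (HD a c)"] DC by simp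
      then show ?thesis using GD_char DC by simp
    qed
    ultimately show "lq (mm (GD (HD a b)) (GD (HD b c))) (GD (HD a c))" by simp
  qed
  have g6: "\<forall>a\<in>D. PD (SD a a) = zz" by (simp add: SD_self PD_bot)
  have g7: "\<forall>a\<in>D. \<forall>b\<in>D. \<forall>c\<in>D. PD (SD (jj a b) c) = jj (PD (SD a c)) (PD (SD b c))"
    by (simp add: SD_join1 PD_join DC)
  have g8: "\<forall>a\<in>D. \<forall>b\<in>D. \<forall>c\<in>D. PD (SD a (mm b c)) = jj (PD (SD a b)) (PD (SD a c))"
    by (simp add: SD_meet2 PD_join DC)
  have g9: "\<forall>a\<in>D. \<forall>b\<in>D. \<forall>c\<in>D. lq (PD (SD a c)) (jj (PD (SD a b)) (PD (SD b c)))"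
  proof (intro ballI)
    fix a b c assume h: "a \<in> D" "b \<in> D" "c \<in> D"
    have "jj (PD (SD a b)) (PD (SD b c)) = PD (jj (SD a b) (SD b c))" using DC by (simp add: PD_join)
    moreover have "lq (PD (SD a c)) (PD (jj (SD a b) (SD b c)))"
    proof -
      have "lq (SD a c) (jj (SD a b) (SD b c))" using h by (rule SD_trans)
      then have "lq (P (SD a c)) (P (jj (SD a b) (SD b c)))" using DC by (simp add: P_mono)
      moreover have "lq (P (jj (SD a b) (SD b c))) (PD (jj (SD a b) (SD b c)))"
        using PD_char[of "PD (jj (SD a b) (SD b c))" "jj (SD a b) (SD b c)"] DC le_refl by simp
      ultimately have "lq (P (SD a c)) (PD (jj (SD a b) (SD b c)))"
        using le_trans[of "P (SD a c)" "P (jj (SD a b) (SD b c))" "PD (jj (SD a b) (SD b c))"] DC by simp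
      then show ?thesis using PD_char DC by simp
    qed
    ultimately show "lq (PD (SD a c)) (jj (PD (SD a b)) (PD (SD b c)))" by simp
  qed
  have g10: "\<forall>a\<in>D. \<forall>b\<in>D. lq (mm a (PD (SD (GD (HD a b)) zz))) b"
  proof (intro ballI)
    fix a b assume h: "a \<in> D" "b \<in> D"
    have "lq (PD (GD (HD a b))) (HD a b)" by (simp add: PD_GD)
    then have "lq (mm a (PD (GD (HD a b)))) (mm a (HD a b))" using h DC meet_mono le_refl by simp
    moreover have "lq (mm a (HD a b)) b" using HD_char[of a b "HD a b"] h DC le_refl by simp
    ultimately show "lq (mm a (PD (SD (GD (HD a b)) zz))) b"
      using h DC le_trans[of "mm a (PD (GD (HD a b)))" "mm a (HD a b)" b] by (simp add: SD_bot2)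
  qed
  have g11: "\<forall>a\<in>D. \<forall>b\<in>D. lq a (jj b (GD (HD oo (PD (SD a b)))))"
  proof (intro ballI)
    fix a b assume h: "a \<in> D" "b \<in> D"
    have "lq (SD a b) (GD (PD (SD a b)))" by (simp add: GD_PD)
    then have "lq (jj b (SD a b)) (jj b (GD (PD (SD a b))))" using h DC join_mono le_refl by simp
    moreover have "lq a (jj b (SD a b))" using SD_char[of a b "SD a b"] h DC le_refl by simp
    ultimately show "lq a (jj b (GD (HD oo (PD (SD a b)))))"
      using h DC le_trans[of a "jj b (SD a b)" "jj b (GD (PD (SD a b)))"] by (simp add: HD_top1)
  qed
  show ?thesis
    unfolding whb_algebra_def bdl_def Bst_simps leqB
    using f1 f2 f3 f4 f5 f6 g1 g2 g3 g4 g5 g6 g7 g8 g9 g10 g11 zz_D oo_D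
    by - (intro conjI; assumption)
qed

lemma imp_agree: "a \<in> D \<Longrightarrow> b \<in> D \<Longrightarrow> imp a b \<in> D \<Longrightarrow> P (imp a b) \<in> D \<Longrightarrow> GD (HD a b) = imp a b"
proof -
  assume h: "a \<in> D" "b \<in> D" "imp a b \<in> D" "P (imp a b) \<in> D"
  note hc = DC[OF h(1)] DC[OF h(2)] DC[OF h(3)] DC[OF h(4)]
  define x where "x = HD a b"
  have x: "x \<in> D" "x \<in> C" unfolding x_def using DC by simp_all
  have 1: "lq (GD x) (G x)" using GD_char[of "GD x" x] x DC le_refl by simp
  have "lq (mm a x) b" using HD_char[of a b x] h x le_refl unfolding x_def by simp
  then have 2: "lq (G x) (imp a b)" using G_imp hc x by simp
  have le1: "lq (GD x) (imp a b)" using le_trans[of "GD x" "G x" "imp a b"] 1 2 x hc DC by simp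
  have "lq (mm a (P (imp a b))) b" using Wp(7)[of a b] hc by (simp add: P_def)
  then have "lq (P (imp a b)) x" using HD_char[of a b "P (imp a b)"] h unfolding x_def by simp
  then have "lq (imp a b) (G x)" using adj1 hc x by simp
  then have le2: "lq (imp a b) (GD x)" using GD_char[of "imp a b" x] h x by simp
  show ?thesis using le_antisym[of "GD x" "imp a b"] le1 le2 x hc DC unfolding x_def by simp
qed
lemma cim_agree: "a \<in> D \<Longrightarrow> b \<in> D \<Longrightarrow> cim a b \<in> D \<Longrightarrow> G (cim a b) \<in> D \<Longrightarrow> PD (SD a b) = cim a b"
proof -
  assume h: "a \<in> D" "b \<in> D" "cim a b \<in> D" "G (cim a b) \<in> D"
  note hc = DC[OF h(1)] DC[OF h(2)] DC[OF h(3)] DC[OF h(4)]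
  define x where "x = SD a b"
  have x: "x \<in> D" "x \<in> C" unfolding x_def using DC by simp_all
  have 1: "lq (P x) (PD x)" using PD_char[of "PD x" x] x DC le_refl by simp
  have "lq a (jj b x)" using SD_char[of a b x] h x le_refl unfolding x_def by simp
  then have 2: "lq (cim a b) (P x)" using cim_P hc x by simp
  have le1: "lq (cim a b) (PD x)" using le_trans[of "cim a b" "P x" "PD x"] 1 2 x hc DC by simp
  have "lq a (jj b (G (cim a b)))" using Wp(8)[of a b] hc by (simp add: G_def)
  then have "lq x (G (cim a b))" using SD_char[of a b "G (cim a b)"] h unfolding x_def by simp
  then have "lq (P x) (cim a b)" using adj2 hc x by simp
  then have le2: "lq (PD x) (cim a b)" using PD_char[of "cim a b" x] h x by simp
  show ?thesis using le_antisym[of "PD x" "cim a b"] le1 le2 x hc DC unfolding x_def by simp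
qed

end

lemma whb_closure:
  assumes "whb_algebra B" "a \<in> car B" "b \<in> car B"
  shows "mt B a b \<in> car B" "jn B a b \<in> car B" "im B a b \<in> car B" "coim B a b \<in> car B"
  using assms bdl_parts(3)[OF whb_parts(1)[OF assms(1)]] whb_parts(2)[OF assms(1)] by simp_all
lemma whb_closure0:
  assumes "whb_algebra B" shows "zr B \<in> car B" "on B \<in> car B"
  using bdl_parts(1,2)[OF whb_parts(1)[OF assms(1)]] by simp_all

lemma eval_car: "whb_algebra B \<Longrightarrow> (\<forall>n. v n \<in> car B) \<Longrightarrow> eval B v u \<in> car B"
  by (induction u) (simp_all add: whb_closure whb_closure0)

lemma transfer:
  fixes B :: "'a whb_struct" and f :: "'a \<Rightarrow> nat"
  assumes W: "whb_algebra B" and inj: "inj_on f (car B)" and fin: "finite (car B)"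
    and nh: "\<not> holds B s t"
  shows "\<exists>B' :: nat whb_struct. whb_algebra B' \<and> finite (car B') \<and> \<not> holds B' s t"
proof -
  define K where "K = car B"
  define g where "g = inv_into K f"
  define B' where "B' = \<lparr>car = f ` K, mt = \<lambda>x y. f (mt B (g x) (g y)), jn = \<lambda>x y. f (jn B (g x) (g y)),
     im = \<lambda>x y. f (im B (g x) (g y)), coim = \<lambda>x y. f (coim B (g x) (g y)), zr = f (zr B), on = f (on B)\<rparr>"
  have gf: "u \<in> K \<Longrightarrow> g (f u) = u" for u unfolding g_def K_def using inj by (simp add: inv_into_f_f)
  have cl: "a \<in> K \<Longrightarrow> b \<in> K \<Longrightarrow> mt B a b \<in> K" "a \<in> K \<Longrightarrow> b \<in> K \<Longrightarrow> jn B a b \<in> K"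
     "a \<in> K \<Longrightarrow> b \<in> K \<Longrightarrow> im B a b \<in> K" "a \<in> K \<Longrightarrow> b \<in> K \<Longrightarrow> coim B a b \<in> K"
     "zr B \<in> K" "on B \<in> K" for a b
    unfolding K_def using whb_closure[OF W] whb_closure0[OF W] by simp_all
  have hom: "a \<in> K \<Longrightarrow> b \<in> K \<Longrightarrow> mt B' (f a) (f b) = f (mt B a b)"
     "a \<in> K \<Longrightarrow> b \<in> K \<Longrightarrow> jn B' (f a) (f b) = f (jn B a b)"
     "a \<in> K \<Longrightarrow> b \<in> K \<Longrightarrow> im B' (f a) (f b) = f (im B a b)"
     "a \<in> K \<Longrightarrow> b \<in> K \<Longrightarrow> coim B' (f a) (f b) = f (coim B a b)"
     "zr B' = f (zr B)" "on B' = f (on B)" "car B' = f ` K" for a b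
    unfolding B'_def by (simp_all add: gf)
  have mem: "u \<in> K \<Longrightarrow> (f u \<in> f ` K) = True" for u by simp
  have injK: "u \<in> K \<Longrightarrow> w \<in> K \<Longrightarrow> (f u = f w) = (u = w)" for u w
    using inj unfolding K_def by (simp add: inj_on_eq_iff)
  have ball: "(\<forall>x\<in>f ` K. P x) = (\<forall>a\<in>K. P (f a))" for P :: "nat \<Rightarrow> bool" by auto
  have "whb_algebra B' = whb_algebra B"
    unfolding whb_algebra_def bdl_def leq_def hom(7) ball K_def[symmetric]
    by (simp add: hom cl mem injK cong: ball_cong)
  then have W': "whb_algebra B'" using W by simp
  have ev: "(\<forall>n. v n \<in> K) \<Longrightarrow> eval B' (f \<circ> v) u = f (eval B v u)" for v u
  proof (induction u)
    case (Var n) then show ?case by simp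
  next
    case (Meet u1 u2) then show ?case using eval_car[OF W, of v] by (simp add: hom K_def)
  next
    case (Join u1 u2) then show ?case using eval_car[OF W, of v] by (simp add: hom K_def)
  next
    case (Imp u1 u2) then show ?case using eval_car[OF W, of v] by (simp add: hom K_def)
  next
    case (Coimp u1 u2) then show ?case using eval_car[OF W, of v] by (simp add: hom K_def)
  next
    case Bot then show ?case by (simp add: hom)
  next
    case Top then show ?case by (simp add: hom)
  qed
  have "\<not> holds B' s t"
  proof
    assume H: "holds B' s t"
    obtain v where v: "\<forall>n. v n \<in> K" "eval B v s \<noteq> eval B v t" using nh unfolding holds_def K_def by blast
    have "\<forall>n. (f \<circ> v) n \<in> car B'" using v by (simp add: hom)
    then have "eval B' (f \<circ> v) s = eval B' (f \<circ> v) t" using H unfolding holds_def by blast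
    then have "f (eval B v s) = f (eval B v t)" using ev v by simp
    then show False using v injK eval_car[OF W, of v] unfolding K_def by simp
  qed
  moreover have "finite (car B')" using fin by (simp add: hom K_def)
  ultimately show ?thesis using W' by blast
qed


primrec subt :: "trm \<Rightarrow> trm set" where
  "subt (Var n) = {Var n}"
| "subt (Meet a b) = insert (Meet a b) (subt a \<union> subt b)"
| "subt (Join a b) = insert (Join a b) (subt a \<union> subt b)"
| "subt (Imp a b) = insert (Imp a b) (subt a \<union> subt b)"
| "subt (Coimp a b) = insert (Coimp a b) (subt a \<union> subt b)"
| "subt Bot = {Bot}"
| "subt Top = {Top}"

lemma fin_subt: "finite (subt u)" by (induction u) auto
lemma self_subt: "u \<in> subt u" by (cases u) auto

lemma (in whb) fmp_aux:
  assumes v: "\<forall>n. v n \<in> C" and ne: "eval A v s \<noteq> eval A v t"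
  shows "\<exists>B :: 'a whb_struct. whb_algebra B \<and> finite (car B) \<and> \<not> holds B s t"
proof -
  define S where "S = subt s \<union> subt t"
  define X0 where "X0 = eval A v ` S"
  define X where "X = X0 \<union> P ` X0 \<union> G ` X0"
  have X0C: "X0 \<subseteq> C" using eval_car[OF W v] unfolding X0_def by auto
  have finX: "finite X" unfolding X_def X0_def S_def by (simp add: fin_subt)
  have XC: "X \<subseteq> C" using X0C unfolding X_def by auto
  interpret whbX A X by unfold_locales (simp_all add: W finX XC)
  have XD: "X0 \<subseteq> D" "P ` X0 \<subseteq> D" "G ` X0 \<subseteq> D" using X_D unfolding X_def by auto
  have inX0: "u \<in> S \<Longrightarrow> eval A v u \<in> X0" for u unfolding X0_def by simp
  define v' where "v' n = (if Var n \<in> S then v n else zz)" for n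
  have key: "subt u \<subseteq> S \<Longrightarrow> eval Bst v' u = eval A v u" for u
  proof (induction u)
    case (Var n) then show ?case by (simp add: v'_def)
  next
    case (Meet a b) then show ?case by (simp add: Bst_simps)
  next
    case (Join a b) then show ?case by (simp add: Bst_simps)
  next
    case (Imp a b)
    then have ab: "subt a \<subseteq> S" "subt b \<subseteq> S" "Imp a b \<in> S" by auto
    have aS: "a \<in> S" "b \<in> S" using ab self_subt by blast+
    have 1: "eval A v a \<in> D" "eval A v b \<in> D" using inX0[OF aS(1)] inX0[OF aS(2)] XD by auto
    have 2: "imp (eval A v a) (eval A v b) \<in> X0" using inX0[OF ab(3)] by simp
    have 3: "imp (eval A v a) (eval A v b) \<in> D" "P (imp (eval A v a) (eval A v b)) \<in> D"
      using 2 XD by auto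
    show ?case using Imp.IH ab imp_agree[OF 1 3] by (simp add: Bst_simps)
  next
    case (Coimp a b)
    then have ab: "subt a \<subseteq> S" "subt b \<subseteq> S" "Coimp a b \<in> S" by auto
    have aS: "a \<in> S" "b \<in> S" using ab self_subt by blast+
    have 1: "eval A v a \<in> D" "eval A v b \<in> D" using inX0[OF aS(1)] inX0[OF aS(2)] XD by auto
    have 2: "cim (eval A v a) (eval A v b) \<in> X0" using inX0[OF ab(3)] by simp
    have 3: "cim (eval A v a) (eval A v b) \<in> D" "G (cim (eval A v a) (eval A v b)) \<in> D"
      using 2 XD by auto
    show ?case using Coimp.IH ab cim_agree[OF 1 3] by (simp add: Bst_simps)
  next
    case Bot then show ?case by (simp add: Bst_simps)
  next
    case Top then show ?case by (simp add: Bst_simps)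
  qed
  have v'D: "\<forall>n. v' n \<in> car Bst"
  proof
    fix n show "v' n \<in> car Bst"
    proof (cases "Var n \<in> S")
      case True then show ?thesis using inX0[OF True] XD by (auto simp: v'_def Bst_simps)
    next
      case False then show ?thesis by (simp add: v'_def Bst_simps zz_D)
    qed
  qed
  have "eval Bst v' s = eval A v s" using key[of s] unfolding S_def by blast
  moreover have "eval Bst v' t = eval A v t" using key[of t] unfolding S_def by blast
  ultimately have "\<not> holds Bst s t" using ne v'D unfolding holds_def by metis
  moreover have "finite (car Bst)" by (simp add: Bst_simps D_fin)
  ultimately show ?thesis using whbB by blast
qed

theorem corollary6p20:
  fixes A :: "'a whb_struct" and s t :: trm
  assumes "whb_algebra A" and "\<not> holds A s t"
  shows "\<exists>B :: nat whb_struct. whb_algebra B \<and> finite (car B) \<and> \<not> holds B s t"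
proof -
  interpret whb A by unfold_locales (rule assms(1))
  obtain v where v: "\<forall>n. v n \<in> car A" "eval A v s \<noteq> eval A v t" using assms(2) unfolding holds_def by blast
  obtain B :: "'a whb_struct" where B: "whb_algebra B" "finite (car B)" "\<not> holds B s t"
    using fmp_aux[OF v] by blast
  obtain f :: "'a \<Rightarrow> nat" where "bij_betw f (car B) {0..<card (car B)}"
    using ex_bij_betw_finite_nat[OF B(2)] by blast
  then have "inj_on f (car B)" by (rule bij_betw_imp_inj_on)
  then show ?thesis using transfer[OF B(1) _ B(2) B(3)] by blast
qed

end
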